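(* Let $(R_1,d_1)$, $(R_2,d_2)$ be finitely generated fusion algebras and $(R,d)$ their product fusion algebra. Then $\omega(R,d)=\max(\omega(R_1,d_1),\omega(R_2,d_2))$.
   Context: A fusion algebra $(R,d)$ consists of a set $I$ with distinguished $e$ and involution $\alpha\mapsto\bar\alpha$, a unital ring structure on $R=\mathbb{Z}[I]$ with unit $e$ and $\xi\eta=\sum_\alpha N^\alpha_{\xi,\eta}\alpha$, $N^\alpha_{\xi,\eta}\in\mathbb{Z}_{\ge0}$ finitely many nonzero, the involution extending to a $\mathbb{Z}$-linear antimultiplicative involution, Frobenius reciprocity $N^\alpha_{\xi,\eta}=N^\xi_{\alpha,\bar\eta}=N^\eta_{\bar\xi,\alpha}$, and $\mathbb{Z}$-linear multiplicative $d:R\to\mathbb{R}$ with $d(\bar\alpha)=d(\alpha)\ge1$ on $I$. $|A|=\sum_{\alpha\in A}d(\alpha)^2$. A finite generating set is a finite $X\subseteq I$, $\bar X=X$, such that every $\alpha\in I$ has nonzero coefficient in some $x_1\cdots x_n$, $x_i\in X$; finitely generated means such $X$ exists. $\ell_X(e)=0$, otherwise $\ell_X(\alpha)$ is the least such $n\ge1$; $B_X(n)=\{\alpha:\ell_X(\alpha)\le n\}$; $\omega_X=\lim_n|B_X(n)|^{1/n}$ (exists), $\omega=\inf_X\omega_X$ over finite generating sets. The product fusion algebra of $(R_i,d_i)$ with irreducibles $I_i$ is $R=R_1\otimes_{\mathbb{Z}}R_2$ with irreducibles $I=I_1\times I_2$ (elements written $\alpha\boxtimes\beta$), unit $e_1\boxtimes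 e_2$, involution $\overline{\alpha\boxtimes\beta}=\bar\alpha\boxtimes\bar\beta$, structure constants $N^{\alpha\boxtimes\alpha'}_{\xi\boxtimes\xi',\eta\boxtimes\eta'}=N^\alpha_{\xi,\eta}N^{\alpha'}_{\xi',\eta'}$ and dimension $d(\alpha\boxtimes\beta)=d_1(\alpha)d_2(\beta)$. *)

theory Defs
  imports Complex_Main
begin

text \<open>A fusion algebra with set of irreducibles I = UNIV :: 'a set, unit e,
  involution cj, structure constants N \<alpha> \<xi> \<eta> = N^\<alpha>_{\<xi>,\<eta>}, and dimension d.
  The ring R = Z[I] is encoded by its structure constants.\<close>

definition fusion_algebra ::
  "'a \<Rightarrow> ('a \<Rightarrow> 'a) \<Rightarrow> ('a \<Rightarrow> 'a \<Rightarrow> 'a \<Rightarrow> nat) \<Rightarrow> ('a \<Rightarrow> real) \<Rightarrow> bool" where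
  "fusion_algebra e cj N d \<longleftrightarrow>
     (\<forall>\<xi> \<eta>. finite {\<alpha>. N \<alpha> \<xi> \<eta> \<noteq> 0}) \<and>
     (\<forall>\<alpha> \<eta>. N \<alpha> e \<eta> = (if \<alpha> = \<eta> then 1 else 0)) \<and>
     (\<forall>\<alpha> \<xi>. N \<alpha> \<xi> e = (if \<alpha> = \<xi> then 1 else 0)) \<and>
     (\<forall>\<alpha> \<xi> \<eta> \<zeta>. (\<Sum>\<beta>\<in>{\<beta>. N \<beta> \<xi> \<eta> \<noteq> 0}. N \<beta> \<xi> \<eta> * N \<alpha> \<beta> \<zeta>)
                  = (\<Sum>\<beta>\<in>{\<beta>. N \<beta> \<eta> \<zeta> \<noteq> 0}. N \<beta> \<eta> \<zeta> * N \<alpha> \<xi> \<beta>)) \<and>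
     (\<forall>\<alpha>. cj (cj \<alpha>) = \<alpha>) \<and>
     (\<forall>\<alpha> \<xi> \<eta>. N (cj \<alpha>) (cj \<eta>) (cj \<xi>) = N \<alpha> \<xi> \<eta>) \<and>
     (\<forall>\<alpha> \<xi> \<eta>. N \<alpha> \<xi> \<eta> = N \<xi> \<alpha> (cj \<eta>) \<and> N \<alpha> \<xi> \<eta> = N \<eta> (cj \<xi>) \<alpha>) \<and>
     (\<forall>\<xi> \<eta>. d \<xi> * d \<eta> = (\<Sum>\<alpha>\<in>{\<alpha>. N \<alpha> \<xi> \<eta> \<noteq> 0}. real (N \<alpha> \<xi> \<eta>) * d \<alpha>)) \<and>
     (\<forall>\<alpha>. d (cj \<alpha>) = d \<alpha> \<and> d \<alpha> \<ge> 1)"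

text \<open>Left multiplication of an element f of R (coefficient function, finite support)
  by an irreducible x.\<close>
definition fmult :: "('a \<Rightarrow> 'a \<Rightarrow> 'a \<Rightarrow> nat) \<Rightarrow> 'a \<Rightarrow> ('a \<Rightarrow> nat) \<Rightarrow> 'a \<Rightarrow> nat" where
  "fmult N x f = (\<lambda>\<alpha>. \<Sum>\<beta>\<in>{\<beta>. f \<beta> \<noteq> 0}. N \<alpha> x \<beta> * f \<beta>)"

fun word_coef :: "'a \<Rightarrow> ('a \<Rightarrow> 'a \<Rightarrow> 'a \<Rightarrow> nat) \<Rightarrow> 'a list \<Rightarrow> 'a \<Rightarrow> nat" where
  "word_coef e N [] = (\<lambda>\<alpha>. if \<alpha> = e then 1 else 0)"
| "word_coef e N (x # xs) = fmult N x (word_coef e N xs)"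

definition gen_set ::
  "'a \<Rightarrow> ('a \<Rightarrow> 'a) \<Rightarrow> ('a \<Rightarrow> 'a \<Rightarrow> 'a \<Rightarrow> nat) \<Rightarrow> 'a set \<Rightarrow> bool" where
  "gen_set e cj N X \<longleftrightarrow> finite X \<and> cj ` X = X \<and>
     (\<forall>\<alpha>. \<exists>xs. xs \<noteq> [] \<and> set xs \<subseteq> X \<and> word_coef e N xs \<alpha> \<noteq> 0)"

definition finitely_generated ::
  "'a \<Rightarrow> ('a \<Rightarrow> 'a) \<Rightarrow> ('a \<Rightarrow> 'a \<Rightarrow> 'a \<Rightarrow> nat) \<Rightarrow> bool" where
  "finitely_generated e cj N \<longleftrightarrow> (\<exists>X. gen_set e cj N X)"

definition word_length ::
  "'a \<Rightarrow> ('a \<Rightarrow> 'a \<Rightarrow> 'a \<Rightarrow> nat) \<Rightarrow> 'a set \<Rightarrow> 'a \<Rightarrow> nat" where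
  "word_length e N X \<alpha> = (if \<alpha> = e then 0 else
     (LEAST n. n \<ge> 1 \<and> (\<exists>xs. length xs = n \<and> set xs \<subseteq> X \<and> word_coef e N xs \<alpha> \<noteq> 0)))"

definition word_ball ::
  "'a \<Rightarrow> ('a \<Rightarrow> 'a \<Rightarrow> 'a \<Rightarrow> nat) \<Rightarrow> 'a set \<Rightarrow> nat \<Rightarrow> 'a set" where
  "word_ball e N X n = {\<alpha>. word_length e N X \<alpha> \<le> n}"

definition dsize :: "('a \<Rightarrow> real) \<Rightarrow> 'a set \<Rightarrow> real" where
  "dsize d A = (\<Sum>\<alpha>\<in>A. (d \<alpha>)\<^sup>2)"

definition omega_X ::
  "'a \<Rightarrow> ('a \<Rightarrow> 'a \<Rightarrow> 'a \<Rightarrow> nat) \<Rightarrow> ('a \<Rightarrow> real) \<Rightarrow> 'a set \<Rightarrow> real" where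
  "omega_X e N d X = lim (\<lambda>n. dsize d (word_ball e N X n) powr (1 / real n))"

definition omega ::
  "'a \<Rightarrow> ('a \<Rightarrow> 'a) \<Rightarrow> ('a \<Rightarrow> 'a \<Rightarrow> 'a \<Rightarrow> nat) \<Rightarrow> ('a \<Rightarrow> real) \<Rightarrow> real" where
  "omega e cj N d = (INF X \<in> {X. gen_set e cj N X}. omega_X e N d X)"

definition prod_inv :: "('a \<Rightarrow> 'a) \<Rightarrow> ('b \<Rightarrow> 'b) \<Rightarrow> 'a \<times> 'b \<Rightarrow> 'a \<times> 'b" where
  "prod_inv cj1 cj2 = (\<lambda>(a, b). (cj1 a, cj2 b))"

definition prod_N ::
  "('a \<Rightarrow> 'a \<Rightarrow> 'a \<Rightarrow> nat) \<Rightarrow> ('b \<Rightarrow> 'b \<Rightarrow> 'b \<Rightarrow> nat) \<Rightarrow>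
   'a \<times> 'b \<Rightarrow> 'a \<times> 'b \<Rightarrow> 'a \<times> 'b \<Rightarrow> nat" where
  "prod_N N1 N2 = (\<lambda>(\<alpha>, \<alpha>') (\<xi>, \<xi>') (\<eta>, \<eta>'). N1 \<alpha> \<xi> \<eta> * N2 \<alpha>' \<xi>' \<eta>')"

definition prod_d :: "('a \<Rightarrow> real) \<Rightarrow> ('b \<Rightarrow> real) \<Rightarrow> 'a \<times> 'b \<Rightarrow> real" where
  "prod_d d1 d2 = (\<lambda>(a, b). d1 a * d2 b)"

end

theory Submission
  imports Defs
begin


lemma fekete_iter:
  fixes a :: "nat \<Rightarrow> real"
  assumes sub: "\<And>m n. m \<ge> 1 \<Longrightarrow> n \<ge> 1 \<Longrightarrow> a (m+n) \<le> a m + a n"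
    and k: "k \<ge> 1" and r: "r \<ge> 1"
  shows "a (q*k + r) \<le> real q * a k + a r"
proof (induction q)
  case 0 then show ?case by simp
next
  case (Suc q)
  have "a (Suc q * k + r) = a (k + (q*k + r))" by (simp add: algebra_simps)
  also have "\<dots> \<le> a k + a (q*k+r)" using sub k r by simp
  also have "\<dots> \<le> a k + (real q * a k + a r)" using Suc by simp
  finally show ?case by (simp add: algebra_simps)
qed

lemma fekete:
  fixes a :: "nat \<Rightarrow> real"
  assumes sub: "\<And>m n. m \<ge> 1 \<Longrightarrow> n \<ge> 1 \<Longrightarrow> a (m+n) \<le> a m + a n"
    and nn: "\<And>n. a n \<ge> 0"
  shows "(\<lambda>n. a n / real n) \<longlonglongrightarrow> (INF n\<in>{1..}. a n / real n)"
    and "\<And>n. n \<ge> 1 \<Longrightarrow> (INF n\<in>{1..}. a n / real n) \<le> a n / real n"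
    and "(INF n\<in>{1..}. a n / real n) \<ge> 0"
proof -
  let ?L = "(INF n\<in>{1..}. a n / real n)"
  have bdd: "bdd_below ((\<lambda>n. a n / real n) ` {1..})"
    by (rule bdd_belowI[of _ 0]) (use nn in auto)
  show low: "\<And>n. n \<ge> 1 \<Longrightarrow> ?L \<le> a n / real n"
    using bdd by (intro cINF_lower) auto
  show "?L \<ge> 0" by (rule cINF_greatest) (use nn in auto)
  show "(\<lambda>n. a n / real n) \<longlonglongrightarrow> ?L"
  proof (rule LIMSEQ_I)
    fix \<epsilon> :: real assume ep: "\<epsilon> > 0"
    have "\<exists>k\<in>{1..}. a k / real k < ?L + \<epsilon>/2"
      using ep by (subst cINF_less_iff[OF _ bdd, symmetric]) auto
    then obtain k where k: "k \<in> {1..}" "a k / real k < ?L + \<epsilon>/2" by blast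
    define M where "M = Max (a ` {1..k})"
    have M: "\<And>r. r \<in> {1..k} \<Longrightarrow> a r \<le> M" unfolding M_def by simp
    have M0: "M \<ge> 0" using M[of 1] nn[of 1] k by auto
    obtain N0 :: nat where N0: "real N0 > M / (\<epsilon>/2)" using reals_Archimedean2 by blast
    show "\<exists>no. \<forall>n\<ge>no. norm (a n / real n - ?L) < \<epsilon>"
    proof (intro exI allI impI)
      fix n assume n: "n \<ge> max 1 N0"
      define q where "q = (n - 1) div k"
      define r where "r = (n - 1) mod k + 1"
      have k1: "k \<ge> 1" using k by auto
      have nq: "n = q*k + r" unfolding q_def r_def using n k1
        by simp
      have r1: "r \<in> {1..k}" unfolding r_def using k1
        by (simp add: Suc_leI)
      have "a n \<le> real q * a k + a r" using nq fekete_iter[OF sub k1, of r q] r1 by auto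
      also have "\<dots> \<le> real q * a k + M" using M r1 by simp
      finally have an: "a n \<le> real q * a k + M" .
      have npos: "real n > 0" using n by auto
      have qk: "real q * real k \<le> real n" using nq by (metis of_nat_le_iff of_nat_mult le_add1)
      have "real q * a k = (real q * real k) * (a k / real k)" using k1 by simp
      also have "\<dots> \<le> real n * (a k / real k)"
        using qk nn[of k] k1 by (intro mult_right_mono) auto
      finally have "a n \<le> real n * (a k / real k) + M" using an by simp
      hence "a n / real n \<le> a k / real k + M / real n" using npos by (simp add: field_simps)
      moreover have "M / real n < \<epsilon>/2"
      proof -
        have "real n \<ge> real N0" using n by simp
        hence "real n > M / (\<epsilon>/2)" using N0 by simp
        thus ?thesis using npos ep by (simp add: field_simps)
      qed
      ultimately have "a n / real n < ?L + \<epsilon>" using k(2) by linarith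
      moreover have "?L \<le> a n / real n" using low n by simp
      ultimately show "norm (a n / real n - ?L) < \<epsilon>" using ep by simp
    qed
  qed
qed

lemma submult_limit:
  fixes b :: "nat \<Rightarrow> real"
  assumes b1: "\<And>n. b n \<ge> 1"
    and sm: "\<And>m n. m \<ge> 1 \<Longrightarrow> n \<ge> 1 \<Longrightarrow> b (m+n) \<le> b m * b n"
  shows "\<exists>W. (\<lambda>n. b n powr (1 / real n)) \<longlonglongrightarrow> W \<and> (\<forall>n\<ge>1. W \<le> b n powr (1 / real n)) \<and> W \<ge> 1"
proof -
  define a where "a n = ln (b n)" for n
  have bpos: "b n > 0" for n using b1[of n] by linarith
  have sub: "a (m+n) \<le> a m + a n" if "m \<ge> 1" "n \<ge> 1" for m n
  proof -
    have "ln (b (m+n)) \<le> ln (b m * b n)" using sm[OF that] bpos by (subst ln_le_cancel_iff) auto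
    thus ?thesis unfolding a_def using bpos[of m] bpos[of n] by (simp add: ln_mult)
  qed
  have nn: "a n \<ge> 0" for n unfolding a_def using b1[of n] by simp
  let ?L = "(INF n\<in>{1..}. a n / real n)"
  have eq: "b n powr (1 / real n) = exp (a n / real n)" for n
    unfolding a_def powr_def using bpos[of n] by simp
  show ?thesis
  proof (intro exI conjI allI impI)
    show "(\<lambda>n. b n powr (1 / real n)) \<longlonglongrightarrow> exp ?L"
      unfolding eq by (rule tendsto_exp[OF fekete(1)[OF sub nn]])
    show "exp ?L \<le> b n powr (1 / real n)" if "n \<ge> 1" for n
      unfolding eq using fekete(2)[OF sub nn that] by simp
    show "1 \<le> exp ?L" using fekete(3)[OF sub nn] by simp
  qed
qed


definition smul :: "('a \<Rightarrow> 'a \<Rightarrow> 'a \<Rightarrow> nat) \<Rightarrow> 'a set \<Rightarrow> 'a set \<Rightarrow> 'a set" where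
  "smul N A B = {\<gamma>. \<exists>\<alpha>\<in>A. \<exists>\<beta>\<in>B. N \<gamma> \<alpha> \<beta> \<noteq> 0}"

definition wsupp :: "'a \<Rightarrow> ('a \<Rightarrow> 'a \<Rightarrow> 'a \<Rightarrow> nat) \<Rightarrow> 'a list \<Rightarrow> 'a set" where
  "wsupp e N xs = {\<alpha>. word_coef e N xs \<alpha> \<noteq> 0}"

lemma sum_UN_le:
  fixes f :: "'a \<Rightarrow> real"
  assumes "finite I" "\<And>i. i \<in> I \<Longrightarrow> finite (A i)" "\<And>x. f x \<ge> 0"
  shows "sum f (\<Union>i\<in>I. A i) \<le> (\<Sum>i\<in>I. sum f (A i))"
  using assms
proof (induction I rule: finite_induct)
  case empty then show ?case by simp
next
  case (insert i I)
  have fin: "finite (\<Union>i\<in>I. A i)" using insert by auto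
  have "sum f (\<Union>j\<in>insert i I. A j) = sum f (A i \<union> (\<Union>j\<in>I. A j))" by simp
  also have "\<dots> = sum f (A i) + sum f (\<Union>j\<in>I. A j) - sum f (A i \<inter> (\<Union>j\<in>I. A j))"
    using fin insert by (intro sum_Un) auto
  also have "\<dots> \<le> sum f (A i) + sum f (\<Union>j\<in>I. A j)"
    using insert.prems by (simp add: sum_nonneg)
  also have "\<dots> \<le> sum f (A i) + (\<Sum>j\<in>I. sum f (A j))" using insert by simp
  finally show ?case using insert by simp
qed

definition genX :: "'a \<Rightarrow> ('a \<Rightarrow> 'a \<Rightarrow> 'a \<Rightarrow> nat) \<Rightarrow> 'a set \<Rightarrow> bool" where
  "genX e N X \<longleftrightarrow> finite X \<and> (\<forall>\<alpha>. \<exists>xs. xs \<noteq> [] \<and> set xs \<subseteq> X \<and> \<alpha> \<in> wsupp e N xs)"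

locale fa =
  fixes e :: 'a and N :: "'a \<Rightarrow> 'a \<Rightarrow> 'a \<Rightarrow> nat" and d :: "'a \<Rightarrow> real"
  assumes fin: "finite {\<alpha>. N \<alpha> \<xi> \<eta> \<noteq> 0}"
  and lunit: "N \<alpha> e \<eta> \<noteq> 0 \<longleftrightarrow> \<alpha> = \<eta>"
  and assoc: "(\<exists>\<beta>. N \<beta> \<xi> \<eta> \<noteq> 0 \<and> N \<gamma> \<beta> \<zeta> \<noteq> 0) \<longleftrightarrow> (\<exists>\<beta>. N \<beta> \<eta> \<zeta> \<noteq> 0 \<and> N \<gamma> \<xi> \<beta> \<noteq> 0)"
  and nonempty: "\<exists>\<alpha>. N \<alpha> \<xi> \<eta> \<noteq> 0"
  and dim: "(\<Sum>\<gamma>\<in>{\<gamma>. N \<gamma> \<xi> \<eta> \<noteq> 0}. (d \<gamma>)\<^sup>2) \<le> (d \<xi>)\<^sup>2 * (d \<eta>)\<^sup>2"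
  and dge: "d \<alpha> \<ge> 1"
begin

lemma wsupp_Nil: "wsupp e N [] = {e}" unfolding wsupp_def by auto

lemma wsupp_Cons_fin:
  "finite (wsupp e N xs) \<and> wsupp e N (x # xs) = smul N {x} (wsupp e N xs)"
proof -
  have fxs: "finite (wsupp e N xs)"
  proof (induction xs)
    case Nil then show ?case by (simp add: wsupp_Nil)
  next
    case (Cons y ys)
    have "wsupp e N (y # ys) \<subseteq> (\<Union>\<beta>\<in>wsupp e N ys. {\<alpha>. N \<alpha> y \<beta> \<noteq> 0})"
    proof
      fix \<alpha> assume "\<alpha> \<in> wsupp e N (y # ys)"
      hence "(\<Sum>\<beta>\<in>{\<beta>. word_coef e N ys \<beta> \<noteq> 0}. N \<alpha> y \<beta> * word_coef e N ys \<beta>) \<noteq> 0"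
        unfolding wsupp_def by (simp add: fmult_def)
      then obtain \<beta> where "\<beta> \<in> {\<beta>. word_coef e N ys \<beta> \<noteq> 0}" "N \<alpha> y \<beta> * word_coef e N ys \<beta> \<noteq> 0"
        by (rule sum.not_neutral_contains_not_neutral)
      thus "\<alpha> \<in> (\<Union>\<beta>\<in>wsupp e N ys. {\<alpha>. N \<alpha> y \<beta> \<noteq> 0})" unfolding wsupp_def by auto
    qed
    then show ?case using Cons fin finite_subset by blast
  qed
  moreover have "wsupp e N (x # xs) = smul N {x} (wsupp e N xs)"
    using fxs unfolding wsupp_def smul_def by (auto simp: fmult_def)
  ultimately show ?thesis by blast
qed

lemma finite_wsupp: "finite (wsupp e N xs)" using wsupp_Cons_fin by blast
lemma wsupp_Cons: "wsupp e N (x # xs) = smul N {x} (wsupp e N xs)" using wsupp_Cons_fin by blast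

lemma smul_assoc: "smul N (smul N A B) C = smul N A (smul N B C)"
proof (rule set_eqI)
  fix \<gamma>
  have "\<gamma> \<in> smul N (smul N A B) C \<longleftrightarrow> (\<exists>a\<in>A. \<exists>b\<in>B. \<exists>c\<in>C. \<exists>\<delta>. N \<delta> a b \<noteq> 0 \<and> N \<gamma> \<delta> c \<noteq> 0)"
    unfolding smul_def by blast
  also have "\<dots> \<longleftrightarrow> (\<exists>a\<in>A. \<exists>b\<in>B. \<exists>c\<in>C. \<exists>\<delta>. N \<delta> b c \<noteq> 0 \<and> N \<gamma> a \<delta> \<noteq> 0)"
    by (simp only: assoc)
  also have "\<dots> \<longleftrightarrow> \<gamma> \<in> smul N A (smul N B C)"
    unfolding smul_def by blast
  finally show "\<gamma> \<in> smul N (smul N A B) C \<longleftrightarrow> \<gamma> \<in> smul N A (smul N B C)" .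
qed

lemma smul_unit: "smul N {e} A = A"
  unfolding smul_def using lunit by (auto simp del: neq0_conv)

lemma wsupp_append: "wsupp e N (xs @ ys) = smul N (wsupp e N xs) (wsupp e N ys)"
proof (induction xs)
  case Nil then show ?case by (simp add: wsupp_Nil smul_unit)
next
  case (Cons x xs) then show ?case by (simp add: wsupp_Cons smul_assoc)
qed

lemma wsupp_filter: "wsupp e N (filter (\<lambda>x. x \<noteq> e) xs) = wsupp e N xs"
  by (induction xs) (auto simp: wsupp_Cons smul_unit)

lemma wsupp_nonempty: "wsupp e N xs \<noteq> {}"
proof (induction xs)
  case Nil then show ?case by (simp add: wsupp_Nil)
next
  case (Cons x xs)
  then obtain b where "b \<in> wsupp e N xs" by blast
  moreover obtain a where "N a x b \<noteq> 0" using nonempty by blast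
  ultimately show ?case unfolding wsupp_Cons smul_def by blast
qed


lemma ball_iff:
  assumes "genX e N X"
  shows "\<alpha> \<in> word_ball e N X n \<longleftrightarrow> (\<exists>xs. length xs \<le> n \<and> set xs \<subseteq> X \<and> \<alpha> \<in> wsupp e N xs)"
proof (cases "\<alpha> = e")
  case True
  then show ?thesis unfolding word_ball_def word_length_def
    by (auto intro!: exI[of _ "[]"] simp: wsupp_Nil)
next
  case False
  let ?P = "\<lambda>n. n \<ge> 1 \<and> (\<exists>xs. length xs = n \<and> set xs \<subseteq> X \<and> word_coef e N xs \<alpha> \<noteq> 0)"
  obtain xs0 where xs0: "xs0 \<noteq> []" "set xs0 \<subseteq> X" "\<alpha> \<in> wsupp e N xs0"
    using assms unfolding genX_def by blast
  have P0: "?P (length xs0)" using xs0 unfolding wsupp_def by (auto simp: Suc_le_eq)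
  show ?thesis
  proof
    assume "\<alpha> \<in> word_ball e N X n"
    hence le: "(LEAST n. ?P n) \<le> n" using False unfolding word_ball_def word_length_def by simp
    from LeastI[of ?P, OF P0] obtain xs where xs: "length xs = (LEAST n. ?P n)" "set xs \<subseteq> X" "word_coef e N xs \<alpha> \<noteq> 0"
      by blast
    have "length xs \<le> n" using xs(1) le by simp
    thus "\<exists>xs. length xs \<le> n \<and> set xs \<subseteq> X \<and> \<alpha> \<in> wsupp e N xs" using xs(2,3) unfolding wsupp_def by blast
  next
    assume "\<exists>xs. length xs \<le> n \<and> set xs \<subseteq> X \<and> \<alpha> \<in> wsupp e N xs"
    then obtain xs where xs: "length xs \<le> n" "set xs \<subseteq> X" "\<alpha> \<in> wsupp e N xs" by blast
    have "xs \<noteq> []" using xs False by (auto simp: wsupp_Nil)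
    hence "?P (length xs)" using xs unfolding wsupp_def by (auto simp: Suc_le_eq)
    hence "(LEAST n. ?P n) \<le> length xs" by (rule Least_le)
    thus "\<alpha> \<in> word_ball e N X n" using xs False unfolding word_ball_def word_length_def by simp
  qed
qed

lemma finite_ball:
  assumes "genX e N X" shows "finite (word_ball e N X n)"
proof -
  have "word_ball e N X n \<subseteq> (\<Union>xs\<in>{xs. set xs \<subseteq> X \<and> length xs \<le> n}. wsupp e N xs)"
    using ball_iff[OF assms] by blast
  moreover have "finite {xs. set xs \<subseteq> X \<and> length xs \<le> n}"
    using assms unfolding genX_def by (intro finite_lists_length_le) auto
  ultimately show ?thesis using finite_wsupp by (meson finite_UN_I finite_subset)
qed

lemma e_in_ball: assumes "genX e N X" shows "e \<in> word_ball e N X n"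
  using ball_iff[OF assms] by (auto intro!: exI[of _ "[]"] simp: wsupp_Nil)

lemma dsize_ge1: assumes "genX e N X" shows "dsize d (word_ball e N X n) \<ge> 1"
proof -
  have "(d e)\<^sup>2 \<le> dsize d (word_ball e N X n)" unfolding dsize_def
    using finite_ball[OF assms] e_in_ball[OF assms] by (intro member_le_sum) auto
  moreover have "(d e)\<^sup>2 \<ge> 1" using dge[of e] by (simp add: one_le_power)
  ultimately show ?thesis by linarith
qed

lemma ball_sub:
  assumes "genX e N X"
  shows "word_ball e N X (m + n) \<subseteq> smul N (word_ball e N X m) (word_ball e N X n)"
proof
  fix \<gamma> assume "\<gamma> \<in> word_ball e N X (m + n)"
  then obtain xs where xs: "length xs \<le> m + n" "set xs \<subseteq> X" "\<gamma> \<in> wsupp e N xs"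
    unfolding ball_iff[OF assms] by blast
  have "\<gamma> \<in> smul N (wsupp e N (take m xs)) (wsupp e N (drop m xs))"
    using xs(3) wsupp_append[of "take m xs" "drop m xs"] by simp
  moreover have "wsupp e N (take m xs) \<subseteq> word_ball e N X m"
  proof -
    have "length (take m xs) \<le> m" "set (take m xs) \<subseteq> X" using xs(2) set_take_subset by force+
    thus ?thesis unfolding ball_iff[OF assms] subset_iff by blast
  qed
  moreover have "wsupp e N (drop m xs) \<subseteq> word_ball e N X n"
  proof -
    have "length (drop m xs) \<le> n" "set (drop m xs) \<subseteq> X" using xs(1,2) set_drop_subset by force+
    thus ?thesis unfolding ball_iff[OF assms] subset_iff by blast
  qed
  ultimately show "\<gamma> \<in> smul N (word_ball e N X m) (word_ball e N X n)"
    unfolding smul_def by blast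
qed

lemma dsize_submult:
  assumes "genX e N X"
  shows "dsize d (word_ball e N X (m + n)) \<le> dsize d (word_ball e N X m) * dsize d (word_ball e N X n)"
proof -
  let ?Bm = "word_ball e N X m" and ?Bn = "word_ball e N X n"
  let ?A = "\<lambda>p. {\<gamma>. N \<gamma> (fst p) (snd p) \<noteq> 0}"
  have fm: "finite ?Bm" "finite ?Bn" using finite_ball[OF assms] by auto
  have eqU: "smul N ?Bm ?Bn = (\<Union>p\<in>?Bm \<times> ?Bn. ?A p)" unfolding smul_def by fastforce
  have sub: "word_ball e N X (m + n) \<subseteq> (\<Union>p\<in>?Bm \<times> ?Bn. ?A p)" using ball_sub[OF assms, of m n] unfolding eqU .
  have "dsize d (word_ball e N X (m + n)) \<le> sum (\<lambda>\<gamma>. (d \<gamma>)\<^sup>2) (\<Union>p\<in>?Bm \<times> ?Bn. ?A p)"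
    unfolding dsize_def using sub fm fin by (intro sum_mono2) auto
  also have "\<dots> \<le> (\<Sum>p\<in>?Bm \<times> ?Bn. sum (\<lambda>\<gamma>. (d \<gamma>)\<^sup>2) (?A p))"
    using fm fin by (intro sum_UN_le) auto
  also have "\<dots> \<le> (\<Sum>p\<in>?Bm \<times> ?Bn. (d (fst p))\<^sup>2 * (d (snd p))\<^sup>2)"
    using dim by (intro sum_mono) auto
  also have "\<dots> = dsize d ?Bm * dsize d ?Bn"
    unfolding dsize_def sum_product sum.cartesian_product by (simp add: case_prod_beta)
  finally show ?thesis .
qed

lemma omega_X_props:
  assumes "genX e N X"
  shows "(\<lambda>n. dsize d (word_ball e N X n) powr (1 / real n)) \<longlonglongrightarrow> omega_X e N d X"
    and "\<And>n. n \<ge> 1 \<Longrightarrow> omega_X e N d X \<le> dsize d (word_ball e N X n) powr (1 / real n)"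
    and "omega_X e N d X \<ge> 1"
proof -
  from submult_limit[of "\<lambda>n. dsize d (word_ball e N X n)", OF dsize_ge1[OF assms] dsize_submult[OF assms]]
  obtain W where W: "(\<lambda>n. dsize d (word_ball e N X n) powr (1 / real n)) \<longlonglongrightarrow> W"
    "\<forall>n\<ge>1. W \<le> dsize d (word_ball e N X n) powr (1 / real n)" "W \<ge> 1"
    by blast
  have "omega_X e N d X = W" unfolding omega_X_def using W(1) by (rule limI)
  thus "(\<lambda>n. dsize d (word_ball e N X n) powr (1 / real n)) \<longlonglongrightarrow> omega_X e N d X"
    "\<And>n. n \<ge> 1 \<Longrightarrow> omega_X e N d X \<le> dsize d (word_ball e N X n) powr (1 / real n)"
    "omega_X e N d X \<ge> 1" using W by auto
qed

end


lemma sum_sq_le: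
  fixes f :: "'a \<Rightarrow> real"
  assumes "finite A" "\<And>x. x \<in> A \<Longrightarrow> f x \<ge> 0"
  shows "(\<Sum>x\<in>A. (f x)\<^sup>2) \<le> (\<Sum>x\<in>A. f x)\<^sup>2"
  using assms
proof (induction A rule: finite_induct)
  case empty then show ?case by simp
next
  case (insert x A)
  have s: "(\<Sum>y\<in>A. f y) \<ge> 0" using insert by (intro sum_nonneg) auto
  have fx: "f x \<ge> 0" using insert by auto
  have "(\<Sum>y\<in>insert x A. (f y)\<^sup>2) = (f x)\<^sup>2 + (\<Sum>y\<in>A. (f y)\<^sup>2)" using insert by simp
  also have "\<dots> \<le> (f x)\<^sup>2 + (\<Sum>y\<in>A. f y)\<^sup>2" using insert by simp
  also have "\<dots> \<le> (f x + (\<Sum>y\<in>A. f y))\<^sup>2" using s fx by (simp add: power2_sum)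
  also have "\<dots> = (\<Sum>y\<in>insert x A. f y)\<^sup>2" using insert by simp
  finally show ?case .
qed

lemma fa_of_fusion:
  assumes "fusion_algebra e cj N d"
  shows "fa e N d"
proof (unfold_locales)
  note F = assms[unfolded fusion_algebra_def]
  note F1 = F[THEN conjunct1] and F2 = F[THEN conjunct2, THEN conjunct1]
  note F4 = F[THEN conjunct2, THEN conjunct2, THEN conjunct2, THEN conjunct1]
  note F8 = F[THEN conjunct2, THEN conjunct2, THEN conjunct2, THEN conjunct2, THEN conjunct2, THEN conjunct2, THEN conjunct2, THEN conjunct1]
  note F9 = F[THEN conjunct2, THEN conjunct2, THEN conjunct2, THEN conjunct2, THEN conjunct2, THEN conjunct2, THEN conjunct2, THEN conjunct2]
  show fin: "finite {\<alpha>. N \<alpha> \<xi> \<eta> \<noteq> 0}" for \<xi> \<eta> using F1 by blast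
  show "N \<alpha> e \<eta> \<noteq> 0 \<longleftrightarrow> \<alpha> = \<eta>" for \<alpha> \<eta> using F2 by simp
  show "(\<exists>\<beta>. N \<beta> \<xi> \<eta> \<noteq> 0 \<and> N \<gamma> \<beta> \<zeta> \<noteq> 0) \<longleftrightarrow> (\<exists>\<beta>. N \<beta> \<eta> \<zeta> \<noteq> 0 \<and> N \<gamma> \<xi> \<beta> \<noteq> 0)" for \<xi> \<eta> \<gamma> \<zeta>
  proof -
    have eq: "(\<Sum>\<beta>\<in>{\<beta>. N \<beta> \<xi> \<eta> \<noteq> 0}. N \<beta> \<xi> \<eta> * N \<gamma> \<beta> \<zeta>)
                  = (\<Sum>\<beta>\<in>{\<beta>. N \<beta> \<eta> \<zeta> \<noteq> 0}. N \<beta> \<eta> \<zeta> * N \<gamma> \<xi> \<beta>)" using F4 by blast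
    have l: "(\<Sum>\<beta>\<in>{\<beta>. N \<beta> \<xi> \<eta> \<noteq> 0}. N \<beta> \<xi> \<eta> * N \<gamma> \<beta> \<zeta>) \<noteq> 0 \<longleftrightarrow> (\<exists>\<beta>. N \<beta> \<xi> \<eta> \<noteq> 0 \<and> N \<gamma> \<beta> \<zeta> \<noteq> 0)"
      using sum_eq_0_iff[OF fin[of \<xi> \<eta>], of "\<lambda>\<beta>. N \<beta> \<xi> \<eta> * N \<gamma> \<beta> \<zeta>"] by auto
    have r: "(\<Sum>\<beta>\<in>{\<beta>. N \<beta> \<eta> \<zeta> \<noteq> 0}. N \<beta> \<eta> \<zeta> * N \<gamma> \<xi> \<beta>) \<noteq> 0 \<longleftrightarrow> (\<exists>\<beta>. N \<beta> \<eta> \<zeta> \<noteq> 0 \<and> N \<gamma> \<xi> \<beta> \<noteq> 0)"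
      using sum_eq_0_iff[OF fin[of \<eta> \<zeta>], of "\<lambda>\<beta>. N \<beta> \<eta> \<zeta> * N \<gamma> \<xi> \<beta>"] by auto
    show ?thesis using l r eq by simp
  qed
  have dimeq: "d \<xi> * d \<eta> = (\<Sum>\<alpha>\<in>{\<alpha>. N \<alpha> \<xi> \<eta> \<noteq> 0}. real (N \<alpha> \<xi> \<eta>) * d \<alpha>)" for \<xi> \<eta>
    using F8 by blast
  have dge: "d \<alpha> \<ge> 1" for \<alpha> using F9 by blast
  show "d \<alpha> \<ge> 1" for \<alpha> by (rule dge)
  show "\<exists>\<alpha>. N \<alpha> \<xi> \<eta> \<noteq> 0" for \<xi> \<eta>
  proof (rule ccontr)
    assume "\<not> (\<exists>\<alpha>. N \<alpha> \<xi> \<eta> \<noteq> 0)"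
    hence "{\<alpha>. N \<alpha> \<xi> \<eta> \<noteq> 0} = {}" by auto
    hence "d \<xi> * d \<eta> = 0" using dimeq[of \<xi> \<eta>] by simp
    moreover have "d \<xi> * d \<eta> \<ge> 1" using dge[of \<xi>] dge[of \<eta>]
      by (metis mult_mono' mult_1 zero_le_one)
    ultimately show False by linarith
  qed
  show "(\<Sum>\<gamma>\<in>{\<gamma>. N \<gamma> \<xi> \<eta> \<noteq> 0}. (d \<gamma>)\<^sup>2) \<le> (d \<xi>)\<^sup>2 * (d \<eta>)\<^sup>2" for \<xi> \<eta>
  proof -
    let ?S = "{\<gamma>. N \<gamma> \<xi> \<eta> \<noteq> 0}"
    have "(\<Sum>\<gamma>\<in>?S. (d \<gamma>)\<^sup>2) \<le> (\<Sum>\<gamma>\<in>?S. d \<gamma>)\<^sup>2"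
      using fin dge by (intro sum_sq_le) (auto intro: order_trans[OF zero_le_one])
    also have "(\<Sum>\<gamma>\<in>?S. d \<gamma>) \<le> (\<Sum>\<gamma>\<in>?S. real (N \<gamma> \<xi> \<eta>) * d \<gamma>)"
    proof (rule sum_mono)
      fix \<gamma> assume "\<gamma> \<in> ?S"
      hence "real (N \<gamma> \<xi> \<eta>) \<ge> 1" by simp
      moreover have "d \<gamma> \<ge> 0" using dge[of \<gamma>] by linarith
      ultimately show "d \<gamma> \<le> real (N \<gamma> \<xi> \<eta>) * d \<gamma>" by (metis mult_le_cancel_right1 not_le order.strict_trans2 less_eq_real_def)
    qed
    hence "(\<Sum>\<gamma>\<in>?S. d \<gamma>)\<^sup>2 \<le> (\<Sum>\<gamma>\<in>?S. real (N \<gamma> \<xi> \<eta>) * d \<gamma>)\<^sup>2"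
      using dge by (intro power_mono) (auto intro!: sum_nonneg intro: order_trans[OF zero_le_one])
    also have "\<dots> = (d \<xi> * d \<eta>)\<^sup>2" by (simp only: dimeq[of \<xi> \<eta>])
    also have "\<dots> = (d \<xi>)\<^sup>2 * (d \<eta>)\<^sup>2" by (rule power_mult_distrib)
    finally show ?thesis .
  qed
qed

lemma cj_e:
  assumes "fusion_algebra e cj N d" shows "cj e = e"
proof -
  note F = assms[unfolded fusion_algebra_def]
  note F2 = F[THEN conjunct2, THEN conjunct1]
  note F7 = F[THEN conjunct2, THEN conjunct2, THEN conjunct2, THEN conjunct2, THEN conjunct2, THEN conjunct2, THEN conjunct1]
  have "N e e e = N e e (cj e)" using F7 by blast
  moreover have "N e e e = 1" using F2 by simp
  ultimately have "N e e (cj e) \<noteq> 0" by simp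
  hence "e = cj e" using F2 by (metis zero_neq_one)
  thus ?thesis by simp
qed

lemma fa_prod:
  assumes "fa e1 N1 d1" "fa e2 N2 d2"
  shows "fa (e1, e2) (prod_N N1 N2) (prod_d d1 d2)"
proof -
  interpret A: fa e1 N1 d1 by fact
  interpret B: fa e2 N2 d2 by fact
  have PN: "prod_N N1 N2 p q r = N1 (fst p) (fst q) (fst r) * N2 (snd p) (snd q) (snd r)" for p q r
    by (simp add: prod_N_def case_prod_beta)
  have Pd: "prod_d d1 d2 p = d1 (fst p) * d2 (snd p)" for p by (simp add: prod_d_def case_prod_beta)
  show ?thesis
  proof (unfold_locales)
    fix \<xi> \<eta> :: "'a \<times> 'b"
    have S: "{\<alpha>. prod_N N1 N2 \<alpha> \<xi> \<eta> \<noteq> 0} = {\<alpha>. N1 \<alpha> (fst \<xi>) (fst \<eta>) \<noteq> 0} \<times> {\<beta>. N2 \<beta> (snd \<xi>) (snd \<eta>) \<noteq> 0}"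
      by (auto simp: PN)
    show "finite {\<alpha>. prod_N N1 N2 \<alpha> \<xi> \<eta> \<noteq> 0}" unfolding S using A.fin B.fin by blast
    show "\<exists>\<alpha>. prod_N N1 N2 \<alpha> \<xi> \<eta> \<noteq> 0"
    proof -
      obtain a where "N1 a (fst \<xi>) (fst \<eta>) \<noteq> 0" using A.nonempty by blast
      moreover obtain b where "N2 b (snd \<xi>) (snd \<eta>) \<noteq> 0" using B.nonempty by blast
      ultimately show ?thesis by (intro exI[of _ "(a, b)"]) (simp add: PN)
    qed
    show "(\<Sum>\<gamma>\<in>{\<gamma>. prod_N N1 N2 \<gamma> \<xi> \<eta> \<noteq> 0}. (prod_d d1 d2 \<gamma>)\<^sup>2) \<le> (prod_d d1 d2 \<xi>)\<^sup>2 * (prod_d d1 d2 \<eta>)\<^sup>2"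
    proof -
      have "(\<Sum>\<gamma>\<in>{\<gamma>. prod_N N1 N2 \<gamma> \<xi> \<eta> \<noteq> 0}. (prod_d d1 d2 \<gamma>)\<^sup>2)
          = (\<Sum>a\<in>{\<alpha>. N1 \<alpha> (fst \<xi>) (fst \<eta>) \<noteq> 0}. (d1 a)\<^sup>2) * (\<Sum>b\<in>{\<beta>. N2 \<beta> (snd \<xi>) (snd \<eta>) \<noteq> 0}. (d2 b)\<^sup>2)"
        unfolding S sum_product sum.cartesian_product by (simp add: Pd power_mult_distrib case_prod_beta)
      also have "\<dots> \<le> ((d1 (fst \<xi>))\<^sup>2 * (d1 (fst \<eta>))\<^sup>2) * ((d2 (snd \<xi>))\<^sup>2 * (d2 (snd \<eta>))\<^sup>2)"
        using A.dim B.dim by (intro mult_mono) (auto intro!: sum_nonneg)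
      also have "\<dots> = (prod_d d1 d2 \<xi>)\<^sup>2 * (prod_d d1 d2 \<eta>)\<^sup>2"
        by (simp add: Pd power_mult_distrib)
      finally show ?thesis .
    qed
  next
    fix \<alpha> \<eta> :: "'a \<times> 'b"
    show "prod_N N1 N2 \<alpha> (e1, e2) \<eta> \<noteq> 0 \<longleftrightarrow> \<alpha> = \<eta>"
      using A.lunit[of "fst \<alpha>" "fst \<eta>"] B.lunit[of "snd \<alpha>" "snd \<eta>"] by (auto simp: PN prod_eq_iff)
  next
    fix \<xi> \<eta> \<gamma> \<zeta> :: "'a \<times> 'b"
    have L: "(\<exists>\<beta>. prod_N N1 N2 \<beta> \<xi> \<eta> \<noteq> 0 \<and> prod_N N1 N2 \<gamma> \<beta> \<zeta> \<noteq> 0) \<longleftrightarrow>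
      (\<exists>b. N1 b (fst \<xi>) (fst \<eta>) \<noteq> 0 \<and> N1 (fst \<gamma>) b (fst \<zeta>) \<noteq> 0) \<and>
      (\<exists>b. N2 b (snd \<xi>) (snd \<eta>) \<noteq> 0 \<and> N2 (snd \<gamma>) b (snd \<zeta>) \<noteq> 0)"
      by (auto simp: PN)
    have R: "(\<exists>\<beta>. prod_N N1 N2 \<beta> \<eta> \<zeta> \<noteq> 0 \<and> prod_N N1 N2 \<gamma> \<xi> \<beta> \<noteq> 0) \<longleftrightarrow>
      (\<exists>b. N1 b (fst \<eta>) (fst \<zeta>) \<noteq> 0 \<and> N1 (fst \<gamma>) (fst \<xi>) b \<noteq> 0) \<and>
      (\<exists>b. N2 b (snd \<eta>) (snd \<zeta>) \<noteq> 0 \<and> N2 (snd \<gamma>) (snd \<xi>) b \<noteq> 0)"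
      by (auto simp: PN)
    show "(\<exists>\<beta>. prod_N N1 N2 \<beta> \<xi> \<eta> \<noteq> 0 \<and> prod_N N1 N2 \<gamma> \<beta> \<zeta> \<noteq> 0) \<longleftrightarrow>
          (\<exists>\<beta>. prod_N N1 N2 \<beta> \<eta> \<zeta> \<noteq> 0 \<and> prod_N N1 N2 \<gamma> \<xi> \<beta> \<noteq> 0)"
      unfolding L R using A.assoc B.assoc by blast
  next
    fix \<alpha> :: "'a \<times> 'b"
    show "prod_d d1 d2 \<alpha> \<ge> 1" using A.dge[of "fst \<alpha>"] B.dge[of "snd \<alpha>"]
      by (simp add: Pd) (metis mult_mono' mult_1 zero_le_one)
  qed
qed

lemma smul_prod:
  "smul (prod_N N1 N2) {(x, y)} (A \<times> B) = smul N1 {x} A \<times> smul N2 {y} B"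
  unfolding smul_def prod_N_def by auto

lemma wsupp_prod:
  assumes "fa e1 N1 d1" "fa e2 N2 d2"
  shows "wsupp (e1, e2) (prod_N N1 N2) zs = wsupp e1 N1 (map fst zs) \<times> wsupp e2 N2 (map snd zs)"
proof -
  interpret A: fa e1 N1 d1 by fact
  interpret B: fa e2 N2 d2 by fact
  interpret P: fa "(e1, e2)" "prod_N N1 N2" "prod_d d1 d2" using fa_prod[OF assms] .
  show ?thesis
  proof (induction zs)
    case Nil then show ?case by (simp add: A.wsupp_Nil B.wsupp_Nil P.wsupp_Nil)
  next
    case (Cons z zs)
    obtain x y where z: "z = (x, y)" by fastforce
    show ?case unfolding z P.wsupp_Cons Cons by (simp add: smul_prod A.wsupp_Cons B.wsupp_Cons)
  qed
qed


lemma lift_list: "set ws \<subseteq> f ` X \<Longrightarrow> \<exists>zs. map f zs = ws \<and> set zs \<subseteq> X"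
proof (induction ws)
  case Nil then show ?case by simp
next
  case (Cons w ws)
  then obtain zs where "map f zs = ws" "set zs \<subseteq> X" by auto
  moreover obtain z where "z \<in> X" "f z = w" using Cons.prems by auto
  ultimately show ?case by (intro exI[of _ "z # zs"]) auto
qed

lemma exp_bound:
  fixes b :: "nat \<Rightarrow> real"
  assumes lim: "(\<lambda>n. b n powr (1 / real n)) \<longlonglongrightarrow> w" and wK: "w < K" and b1: "\<And>n. b n \<ge> 1"
  shows "\<exists>C>0. \<forall>n. b n \<le> C * K^n"
proof -
  have "w \<ge> 0" using LIMSEQ_le_const[OF lim, of 0] by simp
  hence Kpos: "K > 0" using wK by linarith
  from order_tendstoD(2)[OF lim wK] obtain N where N: "\<And>n. n \<ge> N \<Longrightarrow> b n powr (1 / real n) < K"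
    by (auto simp: eventually_sequentially)
  define N1 where "N1 = max N 1"
  define C where "C = 1 + (\<Sum>n<N1. b n / K^n)"
  have bnn: "b n / K^n \<ge> 0" for n using b1[of n] Kpos by simp
  have Sge: "(\<Sum>n<N1. b n / K^n) \<ge> 0" using bnn by (intro sum_nonneg) auto
  have C1: "C \<ge> 1" using Sge unfolding C_def by simp
  show ?thesis
  proof (intro exI[of _ C] conjI allI)
    show "C > 0" using C1 by simp
    fix n
    have Kn: "K^n > 0" using Kpos by simp
    show "b n \<le> C * K^n"
    proof (cases "n < N1")
      case True
      have "b n / K^n \<le> (\<Sum>n<N1. b n / K^n)" using True bnn by (intro member_le_sum) auto
      hence "b n / K^n \<le> C" unfolding C_def by simp
      thus ?thesis using Kn by (simp add: pos_divide_le_eq)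
    next
      case False
      hence n: "n \<ge> N" "n \<ge> 1" unfolding N1_def by auto
      have bp: "b n > 0" using b1[of n] by linarith
      have "b n = (b n powr (1/real n)) ^ n"
      proof -
        have "(b n powr (1/real n)) ^ n = (b n powr (1/real n)) powr real n" using bp by (simp add: powr_realpow)
        also have "\<dots> = b n powr (1/real n * real n)" by (simp add: powr_powr)
        also have "\<dots> = b n" using n bp by simp
        finally show ?thesis by simp
      qed
      also have "\<dots> \<le> K ^ n" using N[OF n(1)] by (intro power_mono) auto
      also have "\<dots> \<le> C * K^n" using C1 Kn mult_right_mono[of 1 C "K^n"] by simp
      finally show ?thesis .
    qed
  qed
qed

lemma dsize_times: "dsize (prod_d d1 d2) (A \<times> B) = dsize d1 A * dsize d2 B"
  unfolding dsize_def sum_product sum.cartesian_product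
  by (simp add: prod_d_def power_mult_distrib case_prod_beta)

locale fa2 = A: fa e1 N1 d1 + B: fa e2 N2 d2
  for e1 :: 'a and N1 d1 and e2 :: 'b and N2 d2
begin

sublocale P: fa "(e1, e2)" "prod_N N1 N2" "prod_d d1 d2"
  using fa_prod[OF A.fa_axioms B.fa_axioms] .

lemma wsP: "wsupp (e1, e2) (prod_N N1 N2) zs = wsupp e1 N1 (map fst zs) \<times> wsupp e2 N2 (map snd zs)"
  using wsupp_prod[OF A.fa_axioms B.fa_axioms] .

lemma lower1:
  assumes g: "genX (e1, e2) (prod_N N1 N2) X"
  shows "genX e1 N1 (fst ` X)"
    and "dsize d1 (word_ball e1 N1 (fst ` X) n) \<le> dsize (prod_d d1 d2) (word_ball (e1, e2) (prod_N N1 N2) X n)"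
proof -
  have finX: "finite X" using g unfolding genX_def by blast
  show g1: "genX e1 N1 (fst ` X)"
    unfolding genX_def
  proof (intro conjI allI)
    show "finite (fst ` X)" using finX by simp
    fix \<alpha>
    obtain zs where zs: "zs \<noteq> []" "set zs \<subseteq> X" "(\<alpha>, e2) \<in> wsupp (e1, e2) (prod_N N1 N2) zs"
      using g unfolding genX_def by blast
    show "\<exists>xs. xs \<noteq> [] \<and> set xs \<subseteq> fst ` X \<and> \<alpha> \<in> wsupp e1 N1 xs"
      using zs by (intro exI[of _ "map fst zs"]) (auto simp: wsP)
  qed
  let ?B1 = "word_ball e1 N1 (fst ` X) n" and ?B = "word_ball (e1, e2) (prod_N N1 N2) X n"
  have sub: "?B1 \<subseteq> fst ` ?B"
  proof
    fix \<alpha> assume "\<alpha> \<in> ?B1"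
    then obtain ws where ws: "length ws \<le> n" "set ws \<subseteq> fst ` X" "\<alpha> \<in> wsupp e1 N1 ws"
      unfolding A.ball_iff[OF g1] by blast
    obtain zs where zs: "map fst zs = ws" "set zs \<subseteq> X" using lift_list[OF ws(2)] by blast
    obtain \<beta> where \<beta>: "\<beta> \<in> wsupp e2 N2 (map snd zs)" using B.wsupp_nonempty by blast
    have "(\<alpha>, \<beta>) \<in> ?B" unfolding P.ball_iff[OF g] using ws zs \<beta>
      by (intro exI[of _ zs]) (auto simp: wsP)
    thus "\<alpha> \<in> fst ` ?B" by force
  qed
  have finB: "finite ?B" using P.finite_ball[OF g] .
  have "dsize d1 ?B1 \<le> sum (\<lambda>\<alpha>. (d1 \<alpha>)\<^sup>2) (fst ` ?B)"
    unfolding dsize_def using sub finB by (intro sum_mono2) auto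
  also have "\<dots> \<le> sum ((\<lambda>\<alpha>. (d1 \<alpha>)\<^sup>2) \<circ> fst) ?B" using finB by (intro sum_image_le) auto
  also have "\<dots> \<le> dsize (prod_d d1 d2) ?B" unfolding dsize_def
  proof (intro sum_mono)
    fix p assume "p \<in> ?B"
    have "(d1 (fst p))\<^sup>2 * 1 \<le> (d1 (fst p))\<^sup>2 * (d2 (snd p))\<^sup>2"
      using B.dge[of "snd p"] by (intro mult_left_mono) (auto simp: one_le_power)
    thus "((\<lambda>\<alpha>. (d1 \<alpha>)\<^sup>2) \<circ> fst) p \<le> (prod_d d1 d2 p)\<^sup>2"
      by (simp add: prod_d_def case_prod_beta power_mult_distrib)
  qed
  finally show "dsize d1 ?B1 \<le> dsize (prod_d d1 d2) ?B" .
qed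

lemma lower2:
  assumes g: "genX (e1, e2) (prod_N N1 N2) X"
  shows "genX e2 N2 (snd ` X)"
    and "dsize d2 (word_ball e2 N2 (snd ` X) n) \<le> dsize (prod_d d1 d2) (word_ball (e1, e2) (prod_N N1 N2) X n)"
proof -
  have finX: "finite X" using g unfolding genX_def by blast
  show g1: "genX e2 N2 (snd ` X)"
    unfolding genX_def
  proof (intro conjI allI)
    show "finite (snd ` X)" using finX by simp
    fix \<alpha>
    obtain zs where zs: "zs \<noteq> []" "set zs \<subseteq> X" "(e1, \<alpha>) \<in> wsupp (e1, e2) (prod_N N1 N2) zs"
      using g unfolding genX_def by blast
    show "\<exists>xs. xs \<noteq> [] \<and> set xs \<subseteq> snd ` X \<and> \<alpha> \<in> wsupp e2 N2 xs"
      using zs by (intro exI[of _ "map snd zs"]) (auto simp: wsP)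
  qed
  let ?B1 = "word_ball e2 N2 (snd ` X) n" and ?B = "word_ball (e1, e2) (prod_N N1 N2) X n"
  have sub: "?B1 \<subseteq> snd ` ?B"
  proof
    fix \<alpha> assume "\<alpha> \<in> ?B1"
    then obtain ws where ws: "length ws \<le> n" "set ws \<subseteq> snd ` X" "\<alpha> \<in> wsupp e2 N2 ws"
      unfolding B.ball_iff[OF g1] by blast
    obtain zs where zs: "map snd zs = ws" "set zs \<subseteq> X" using lift_list[OF ws(2)] by blast
    obtain \<beta> where \<beta>: "\<beta> \<in> wsupp e1 N1 (map fst zs)" using A.wsupp_nonempty by blast
    have "(\<beta>, \<alpha>) \<in> ?B" unfolding P.ball_iff[OF g] using ws zs \<beta>
      by (intro exI[of _ zs]) (auto simp: wsP)
    thus "\<alpha> \<in> snd ` ?B" by force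
  qed
  have finB: "finite ?B" using P.finite_ball[OF g] .
  have "dsize d2 ?B1 \<le> sum (\<lambda>\<alpha>. (d2 \<alpha>)\<^sup>2) (snd ` ?B)"
    unfolding dsize_def using sub finB by (intro sum_mono2) auto
  also have "\<dots> \<le> sum ((\<lambda>\<alpha>. (d2 \<alpha>)\<^sup>2) \<circ> snd) ?B" using finB by (intro sum_image_le) auto
  also have "\<dots> \<le> dsize (prod_d d1 d2) ?B" unfolding dsize_def
  proof (intro sum_mono)
    fix p assume "p \<in> ?B"
    have "1 * (d2 (snd p))\<^sup>2 \<le> (d1 (fst p))\<^sup>2 * (d2 (snd p))\<^sup>2"
      using A.dge[of "fst p"] by (intro mult_right_mono) (auto simp: one_le_power)
    thus "((\<lambda>\<alpha>. (d2 \<alpha>)\<^sup>2) \<circ> snd) p \<le> (prod_d d1 d2 p)\<^sup>2"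
      by (simp add: prod_d_def case_prod_beta power_mult_distrib)
  qed
  finally show "dsize d2 ?B1 \<le> dsize (prod_d d1 d2) ?B" .
qed

lemma powr_seq_le:
  assumes "(\<lambda>n. a n powr (1 / real n)) \<longlonglongrightarrow> x" "(\<lambda>n. b n powr (1 / real n)) \<longlonglongrightarrow> y"
    "\<And>n. 1 \<le> a n" "\<And>n. a n \<le> b n"
  shows "x \<le> y"
proof (rule LIMSEQ_le[OF assms(1,2)])
  show "\<exists>N. \<forall>n\<ge>N. a n powr (1 / real n) \<le> b n powr (1 / real n)"
    using assms(3,4) by (intro exI[of _ 0] allI impI powr_mono2) (auto intro: order_trans[OF zero_le_one])
qed

lemma omega_lower1:
  assumes g: "genX (e1, e2) (prod_N N1 N2) X"
  shows "omega_X e1 N1 d1 (fst ` X) \<le> omega_X (e1, e2) (prod_N N1 N2) (prod_d d1 d2) X"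
  by (rule powr_seq_le[OF A.omega_X_props(1)[OF lower1(1)[OF g]] P.omega_X_props(1)[OF g]
        A.dsize_ge1[OF lower1(1)[OF g]] lower1(2)[OF g]])

lemma omega_lower2:
  assumes g: "genX (e1, e2) (prod_N N1 N2) X"
  shows "omega_X e2 N2 d2 (snd ` X) \<le> omega_X (e1, e2) (prod_N N1 N2) (prod_d d1 d2) X"
  by (rule powr_seq_le[OF B.omega_X_props(1)[OF lower2(1)[OF g]] P.omega_X_props(1)[OF g]
        B.dsize_ge1[OF lower2(1)[OF g]] lower2(2)[OF g]])

lemma pad1: "wsupp e1 N1 (ws @ replicate k e1) = wsupp e1 N1 ws"
proof -
  have "wsupp e1 N1 (ws @ replicate k e1) = wsupp e1 N1 (filter (\<lambda>x. x \<noteq> e1) (ws @ replicate k e1))"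
    by (rule A.wsupp_filter[symmetric])
  also have "filter (\<lambda>x. x \<noteq> e1) (ws @ replicate k e1) = filter (\<lambda>x. x \<noteq> e1) ws" by simp
  also have "wsupp e1 N1 \<dots> = wsupp e1 N1 ws" by (rule A.wsupp_filter)
  finally show ?thesis .
qed

lemma pad2: "wsupp e2 N2 (replicate k e2 @ vs) = wsupp e2 N2 vs"
proof -
  have "wsupp e2 N2 (replicate k e2 @ vs) = wsupp e2 N2 (filter (\<lambda>x. x \<noteq> e2) (replicate k e2 @ vs))"
    by (rule B.wsupp_filter[symmetric])
  also have "filter (\<lambda>x. x \<noteq> e2) (replicate k e2 @ vs) = filter (\<lambda>x. x \<noteq> e2) vs" by simp
  also have "wsupp e2 N2 \<dots> = wsupp e2 N2 vs" by (rule B.wsupp_filter)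
  finally show ?thesis .
qed

lemma genXp:
  assumes g1: "genX e1 N1 X1" and g2: "genX e2 N2 X2"
  shows "genX (e1, e2) (prod_N N1 N2) (X1 \<times> {e2} \<union> {e1} \<times> X2)"
  unfolding genX_def
proof (intro conjI allI)
  show "finite (X1 \<times> {e2} \<union> {e1} \<times> X2)" using g1 g2 unfolding genX_def by blast
  fix p :: "'a \<times> 'b"
  obtain ws where ws: "ws \<noteq> []" "set ws \<subseteq> X1" "fst p \<in> wsupp e1 N1 ws" using g1 unfolding genX_def by blast
  obtain vs where vs: "vs \<noteq> []" "set vs \<subseteq> X2" "snd p \<in> wsupp e2 N2 vs" using g2 unfolding genX_def by blast
  define zs where "zs = map (\<lambda>x. (x, e2)) ws @ map (\<lambda>y. (e1, y)) vs"
  have m1: "map fst zs = ws @ replicate (length vs) e1" unfolding zs_def by (simp add: o_def map_replicate_const)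
  have m2: "map snd zs = replicate (length ws) e2 @ vs" unfolding zs_def by (simp add: o_def map_replicate_const)
  show "\<exists>xs. xs \<noteq> [] \<and> set xs \<subseteq> X1 \<times> {e2} \<union> {e1} \<times> X2 \<and> p \<in> wsupp (e1, e2) (prod_N N1 N2) xs"
  proof (intro exI[of _ zs] conjI)
    show "zs \<noteq> []" using ws unfolding zs_def by simp
    show "set zs \<subseteq> X1 \<times> {e2} \<union> {e1} \<times> X2" using ws vs unfolding zs_def by auto
    show "p \<in> wsupp (e1, e2) (prod_N N1 N2) zs" unfolding wsP m1 m2 pad1 pad2
      using ws vs by (simp add: mem_Times_iff)
  qed
qed

lemma len_split:
  assumes "set zs \<subseteq> X1 \<times> {e2} \<union> {e1} \<times> X2"
  shows "length (filter (\<lambda>x. x \<noteq> e1) (map fst zs)) + length (filter (\<lambda>y. y \<noteq> e2) (map snd zs)) \<le> length zs"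
  using assms by (induction zs) auto

lemma ball_cover:
  assumes g1: "genX e1 N1 X1" and g2: "genX e2 N2 X2"
  shows "word_ball (e1, e2) (prod_N N1 N2) (X1 \<times> {e2} \<union> {e1} \<times> X2) n
         \<subseteq> (\<Union>k\<in>{..n}. word_ball e1 N1 X1 k \<times> word_ball e2 N2 X2 (n - k))"
proof
  fix p assume "p \<in> word_ball (e1, e2) (prod_N N1 N2) (X1 \<times> {e2} \<union> {e1} \<times> X2) n"
  then obtain zs where zs: "length zs \<le> n" "set zs \<subseteq> X1 \<times> {e2} \<union> {e1} \<times> X2"
    "p \<in> wsupp (e1, e2) (prod_N N1 N2) zs"
    unfolding P.ball_iff[OF genXp[OF g1 g2]] by blast
  define ws where "ws = filter (\<lambda>x. x \<noteq> e1) (map fst zs)"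
  define vs where "vs = filter (\<lambda>y. y \<noteq> e2) (map snd zs)"
  have len: "length ws + length vs \<le> length zs" unfolding ws_def vs_def by (rule len_split[OF zs(2)])
  have "fst p \<in> wsupp e1 N1 ws" unfolding ws_def A.wsupp_filter using zs(3) by (simp add: wsP mem_Times_iff)
  moreover have "set ws \<subseteq> X1" unfolding ws_def using zs(2) by auto
  ultimately have p1: "fst p \<in> word_ball e1 N1 X1 (length ws)" unfolding A.ball_iff[OF g1] by blast
  have "snd p \<in> wsupp e2 N2 vs" unfolding vs_def B.wsupp_filter using zs(3) by (simp add: wsP mem_Times_iff)
  moreover have "set vs \<subseteq> X2" unfolding vs_def using zs(2) by auto
  moreover have "length vs \<le> n - length ws" using len zs(1) by linarith
  ultimately have p2: "snd p \<in> word_ball e2 N2 X2 (n - length ws)" unfolding B.ball_iff[OF g2] by blast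
  have "length ws \<le> n" using len zs(1) by linarith
  thus "p \<in> (\<Union>k\<in>{..n}. word_ball e1 N1 X1 k \<times> word_ball e2 N2 X2 (n - k))"
    using p1 p2 by (intro UN_I[of "length ws"]) (auto simp: mem_Times_iff)
qed

lemma dsize_cover:
  assumes g1: "genX e1 N1 X1" and g2: "genX e2 N2 X2"
  shows "dsize (prod_d d1 d2) (word_ball (e1, e2) (prod_N N1 N2) (X1 \<times> {e2} \<union> {e1} \<times> X2) n)
         \<le> (\<Sum>k\<in>{..n}. dsize d1 (word_ball e1 N1 X1 k) * dsize d2 (word_ball e2 N2 X2 (n - k)))"
proof -
  let ?A = "\<lambda>k. word_ball e1 N1 X1 k \<times> word_ball e2 N2 X2 (n - k)"
  have fin: "finite (?A k)" for k using A.finite_ball[OF g1] B.finite_ball[OF g2] by blast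
  have "dsize (prod_d d1 d2) (word_ball (e1, e2) (prod_N N1 N2) (X1 \<times> {e2} \<union> {e1} \<times> X2) n)
        \<le> sum (\<lambda>p. (prod_d d1 d2 p)\<^sup>2) (\<Union>k\<in>{..n}. ?A k)"
    unfolding dsize_def using ball_cover[OF g1 g2, of n] fin by (intro sum_mono2) auto
  also have "\<dots> \<le> (\<Sum>k\<in>{..n}. sum (\<lambda>p. (prod_d d1 d2 p)\<^sup>2) (?A k))"
    using fin by (intro sum_UN_le) auto
  also have "\<dots> = (\<Sum>k\<in>{..n}. dsize d1 (word_ball e1 N1 X1 k) * dsize d2 (word_ball e2 N2 X2 (n - k)))"
    using dsize_times[of d1 d2] unfolding dsize_def by simp
  finally show ?thesis .
qed

lemma omega_upper:
  assumes g1: "genX e1 N1 X1" and g2: "genX e2 N2 X2"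
  shows "omega_X (e1, e2) (prod_N N1 N2) (prod_d d1 d2) (X1 \<times> {e2} \<union> {e1} \<times> X2)
         \<le> max (omega_X e1 N1 d1 X1) (omega_X e2 N2 d2 X2)"
proof (rule field_le_epsilon)
  fix \<epsilon> :: real assume ep: "\<epsilon> > 0"
  let ?X = "X1 \<times> {e2} \<union> {e1} \<times> X2"
  let ?M = "max (omega_X e1 N1 d1 X1) (omega_X e2 N2 d2 X2)"
  define K where "K = ?M + \<epsilon>"
  have M1: "?M \<ge> 1" using A.omega_X_props(3)[OF g1] by simp
  have Kpos: "K > 0" unfolding K_def using M1 ep by simp
  have w1: "omega_X e1 N1 d1 X1 < K" unfolding K_def using ep by simp
  have w2: "omega_X e2 N2 d2 X2 < K" unfolding K_def using ep by simp
  obtain C1 where C1: "C1 > 0" "\<And>n. dsize d1 (word_ball e1 N1 X1 n) \<le> C1 * K^n"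
    using exp_bound[OF A.omega_X_props(1)[OF g1] w1 A.dsize_ge1[OF g1]] by blast
  obtain C2 where C2: "C2 > 0" "\<And>n. dsize d2 (word_ball e2 N2 X2 n) \<le> C2 * K^n"
    using exp_bound[OF B.omega_X_props(1)[OF g2] w2 B.dsize_ge1[OF g2]] by blast
  define C where "C = 2 * C1 * C2"
  have Cpos: "C > 0" unfolding C_def using C1 C2 by simp
  let ?b = "\<lambda>n. dsize (prod_d d1 d2) (word_ball (e1, e2) (prod_N N1 N2) ?X n)"
  have bnd: "?b n \<le> real n * C * K^n" if n: "n \<ge> 1" for n
  proof -
    have "?b n \<le> (\<Sum>k\<in>{..n}. dsize d1 (word_ball e1 N1 X1 k) * dsize d2 (word_ball e2 N2 X2 (n - k)))"
      by (rule dsize_cover[OF g1 g2])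
    also have "\<dots> \<le> (\<Sum>k\<in>{..n}. (C1 * K^k) * (C2 * K^(n - k)))"
    proof (rule sum_mono)
      fix k assume "k \<in> {..n}"
      show "dsize d1 (word_ball e1 N1 X1 k) * dsize d2 (word_ball e2 N2 X2 (n - k)) \<le> (C1 * K^k) * (C2 * K^(n - k))"
        using C1(2)[of k] C2(2)[of "n-k"] A.dsize_ge1[OF g1, of k] B.dsize_ge1[OF g2, of "n-k"]
        by (intro mult_mono) auto
    qed
    also have "\<dots> = (\<Sum>k\<in>{..n}. C1 * C2 * K^n)"
    proof (rule sum.cong)
      fix k assume "k \<in> {..n}"
      hence "K^k * K^(n-k) = K^n" by (simp flip: power_add)
      thus "(C1 * K^k) * (C2 * K^(n - k)) = C1 * C2 * K^n" by (simp add: algebra_simps)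
    qed simp
    also have "\<dots> = (real n + 1) * (C1 * C2 * K^n)" by simp
    also have "\<dots> \<le> (2 * real n) * (C1 * C2 * K^n)"
      using n C1 C2 Kpos by (intro mult_right_mono) auto
    also have "\<dots> = real n * C * K^n" unfolding C_def by simp
    finally show ?thesis .
  qed
  have lim: "(\<lambda>n. root n (real n) * root n C * K) \<longlonglongrightarrow> 1 * 1 * K"
    by (intro tendsto_mult LIMSEQ_root LIMSEQ_root_const Cpos tendsto_const)
  show "omega_X (e1, e2) (prod_N N1 N2) (prod_d d1 d2) ?X \<le> ?M + \<epsilon>"
  proof -
    have "omega_X (e1, e2) (prod_N N1 N2) (prod_d d1 d2) ?X \<le> 1 * 1 * K"
    proof (rule LIMSEQ_le_const[OF lim], intro exI[of _ 1] allI impI)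
      fix n :: nat assume n: "n \<ge> 1"
      have "omega_X (e1, e2) (prod_N N1 N2) (prod_d d1 d2) ?X \<le> ?b n powr (1 / real n)"
        by (rule P.omega_X_props(2)[OF genXp[OF g1 g2] n])
      also have "\<dots> \<le> (real n * C * K^n) powr (1 / real n)"
        using bnd[OF n] P.dsize_ge1[OF genXp[OF g1 g2], of n] by (intro powr_mono2) auto
      also have "\<dots> = real n powr (1 / real n) * C powr (1 / real n) * (K^n) powr (1 / real n)"
        by (simp add: powr_mult)
      also have "(K^n) powr (1 / real n) = K"
      proof -
        have "(K^n) powr (1 / real n) = (K powr real n) powr (1 / real n)" using Kpos by (simp add: powr_realpow)
        also have "\<dots> = K" using n Kpos by (simp add: powr_powr)
        finally show ?thesis .
      qed
      also have "real n powr (1 / real n) = root n (real n)" using n by (simp add: root_powr_inverse)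
      also have "C powr (1 / real n) = root n C" using n Cpos by (simp add: root_powr_inverse)
      finally show "omega_X (e1, e2) (prod_N N1 N2) (prod_d d1 d2) ?X \<le> root n (real n) * root n C * K" .
    qed
    thus ?thesis unfolding K_def by simp
  qed
qed

end


lemma gen_set_iff: "gen_set e cj N X \<longleftrightarrow> genX e N X \<and> cj ` X = X"
  unfolding gen_set_def genX_def wsupp_def by auto

lemma prod_inv_times: "prod_inv f g ` (A \<times> B) = f ` A \<times> g ` B"
  unfolding prod_inv_def by force

theorem proposition3p13:
  fixes e1 :: 'a and cj1 :: "'a \<Rightarrow> 'a" and N1 :: "'a \<Rightarrow> 'a \<Rightarrow> 'a \<Rightarrow> nat" and d1 :: "'a \<Rightarrow> real"
    and e2 :: 'b and cj2 :: "'b \<Rightarrow> 'b" and N2 :: "'b \<Rightarrow> 'b \<Rightarrow> 'b \<Rightarrow> nat" and d2 :: "'b \<Rightarrow> real"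
  assumes "fusion_algebra e1 cj1 N1 d1" and "finitely_generated e1 cj1 N1"
      and "fusion_algebra e2 cj2 N2 d2" and "finitely_generated e2 cj2 N2"
  shows "omega (e1, e2) (prod_inv cj1 cj2) (prod_N N1 N2) (prod_d d1 d2)
         = max (omega e1 cj1 N1 d1) (omega e2 cj2 N2 d2)"
proof -
  have fa1: "fa e1 N1 d1" by (rule fa_of_fusion[OF assms(1)])
  have fa2': "fa e2 N2 d2" by (rule fa_of_fusion[OF assms(3)])
  interpret F: fa2 e1 N1 d1 e2 N2 d2 using fa1 fa2' by (simp add: fa2_def)
  have ce1: "cj1 e1 = e1" by (rule cj_e[OF assms(1)])
  have ce2: "cj2 e2 = e2" by (rule cj_e[OF assms(3)])
  define S1 where "S1 = {X. gen_set e1 cj1 N1 X}"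
  define S2 where "S2 = {X. gen_set e2 cj2 N2 X}"
  define SP where "SP = {X. gen_set (e1, e2) (prod_inv cj1 cj2) (prod_N N1 N2) X}"
  define f1 where "f1 = omega_X e1 N1 d1"
  define f2 where "f2 = omega_X e2 N2 d2"
  define fP where "fP = omega_X (e1, e2) (prod_N N1 N2) (prod_d d1 d2)"
  have o1: "omega e1 cj1 N1 d1 = (INF X\<in>S1. f1 X)" unfolding omega_def S1_def f1_def ..
  have o2: "omega e2 cj2 N2 d2 = (INF X\<in>S2. f2 X)" unfolding omega_def S2_def f2_def ..
  have oP: "omega (e1, e2) (prod_inv cj1 cj2) (prod_N N1 N2) (prod_d d1 d2) = (INF X\<in>SP. fP X)"
    unfolding omega_def SP_def fP_def ..
  have ne1: "S1 \<noteq> {}" using assms(2) unfolding finitely_generated_def S1_def by blast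
  have ne2: "S2 \<noteq> {}" using assms(4) unfolding finitely_generated_def S2_def by blast
  have bdd1: "bdd_below (f1 ` S1)"
    by (rule bdd_belowI[of _ 1]) (auto simp: S1_def f1_def gen_set_iff intro: F.A.omega_X_props(3))
  have bdd2: "bdd_below (f2 ` S2)"
    by (rule bdd_belowI[of _ 1]) (auto simp: S2_def f2_def gen_set_iff intro: F.B.omega_X_props(3))
  have bddP: "bdd_below (fP ` SP)"
    by (rule bdd_belowI[of _ 1]) (auto simp: SP_def fP_def gen_set_iff intro: F.P.omega_X_props(3))
  have mkP: "X1 \<times> {e2} \<union> {e1} \<times> X2 \<in> SP" if "X1 \<in> S1" "X2 \<in> S2" for X1 X2
  proof -
    have g1: "genX e1 N1 X1" "cj1 ` X1 = X1" using that(1) unfolding S1_def gen_set_iff by auto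
    have g2: "genX e2 N2 X2" "cj2 ` X2 = X2" using that(2) unfolding S2_def gen_set_iff by auto
    have "prod_inv cj1 cj2 ` (X1 \<times> {e2} \<union> {e1} \<times> X2) = X1 \<times> {e2} \<union> {e1} \<times> X2"
      unfolding image_Un prod_inv_times using g1(2) g2(2) ce1 ce2 by simp
    thus ?thesis unfolding SP_def gen_set_iff using F.genXp[OF g1(1) g2(1)] by simp
  qed
  have neP: "SP \<noteq> {}" using ne1 ne2 mkP by blast
  have ge: "max (INF X\<in>S1. f1 X) (INF X\<in>S2. f2 X) \<le> (INF X\<in>SP. fP X)"
  proof (rule cINF_greatest[OF neP])
    fix X assume X: "X \<in> SP"
    have gX: "genX (e1, e2) (prod_N N1 N2) X" and ci: "prod_inv cj1 cj2 ` X = X"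
      using X unfolding SP_def gen_set_iff by auto
    have "fst ` (prod_inv cj1 cj2 ` X) = cj1 ` fst ` X"
      unfolding image_image prod_inv_def by (simp add: case_prod_beta)
    hence c1: "cj1 ` fst ` X = fst ` X" using ci by simp
    have "snd ` (prod_inv cj1 cj2 ` X) = cj2 ` snd ` X"
      unfolding image_image prod_inv_def by (simp add: case_prod_beta)
    hence c2: "cj2 ` snd ` X = snd ` X" using ci by simp
    have m1: "fst ` X \<in> S1" unfolding S1_def gen_set_iff using F.lower1(1)[OF gX] c1 by simp
    have m2: "snd ` X \<in> S2" unfolding S2_def gen_set_iff using F.lower2(1)[OF gX] c2 by simp
    have "(INF X\<in>S1. f1 X) \<le> f1 (fst ` X)" by (rule cINF_lower[OF bdd1 m1])
    also have "\<dots> \<le> fP X" unfolding f1_def fP_def by (rule F.omega_lower1[OF gX])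
    finally have a: "(INF X\<in>S1. f1 X) \<le> fP X" .
    have "(INF X\<in>S2. f2 X) \<le> f2 (snd ` X)" by (rule cINF_lower[OF bdd2 m2])
    also have "\<dots> \<le> fP X" unfolding f2_def fP_def by (rule F.omega_lower2[OF gX])
    finally have b: "(INF X\<in>S2. f2 X) \<le> fP X" .
    show "max (INF X\<in>S1. f1 X) (INF X\<in>S2. f2 X) \<le> fP X" using a b by simp
  qed
  have le: "(INF X\<in>SP. fP X) \<le> max (INF X\<in>S1. f1 X) (INF X\<in>S2. f2 X)"
  proof (rule field_le_epsilon)
    fix \<epsilon> :: real assume ep: "\<epsilon> > 0"
    have "\<exists>X\<in>S1. f1 X < (INF X\<in>S1. f1 X) + \<epsilon>"
      using ep by (subst cINF_less_iff[OF ne1 bdd1, symmetric]) simp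
    then obtain X1 where X1: "X1 \<in> S1" "f1 X1 < (INF X\<in>S1. f1 X) + \<epsilon>" by blast
    have "\<exists>X\<in>S2. f2 X < (INF X\<in>S2. f2 X) + \<epsilon>"
      using ep by (subst cINF_less_iff[OF ne2 bdd2, symmetric]) simp
    then obtain X2 where X2: "X2 \<in> S2" "f2 X2 < (INF X\<in>S2. f2 X) + \<epsilon>" by blast
    have g1: "genX e1 N1 X1" using X1(1) unfolding S1_def gen_set_iff by auto
    have g2: "genX e2 N2 X2" using X2(1) unfolding S2_def gen_set_iff by auto
    have "(INF X\<in>SP. fP X) \<le> fP (X1 \<times> {e2} \<union> {e1} \<times> X2)" by (rule cINF_lower[OF bddP mkP[OF X1(1) X2(1)]])
    also have "\<dots> \<le> max (f1 X1) (f2 X2)" unfolding fP_def f1_def f2_def by (rule F.omega_upper[OF g1 g2])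
    also have "\<dots> \<le> max (INF X\<in>S1. f1 X) (INF X\<in>S2. f2 X) + \<epsilon>" using X1(2) X2(2) by linarith
    finally show "(INF X\<in>SP. fP X) \<le> max (INF X\<in>S1. f1 X) (INF X\<in>S2. f2 X) + \<epsilon>" .
  qed
  show ?thesis unfolding o1 o2 oP using ge le by linarith
qed


end
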